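(* Let $\{S_{\mathbf a^{[k]}},\,k\ge0\}$ and $\{S_{\mathbf a^{*[k]}},\,k\ge0\}$ be two local subdivision schemes which both reproduce constants, with difference schemes $\{S_{\mathbf q^{[k]}},\,k\ge0\}$ and $\{S_{\mathbf q^{*[k]}},\,k\ge0\}$. Then the following are equivalent: (i) $\lim_{k\to\infty}\|\mathbf a^{[k]}-\mathbf a^{*[k]}\|=0$ (the schemes are asymptotically similar); (ii) $\lim_{k\to\infty}\|\mathbf q^{[k]}-\mathbf q^{*[k]}\|=0$. If in addition one of the two schemes is bounded (i.e. $\sup_k\|S_{\mathbf a^{[k]}}\|<\infty$ or $\sup_k\|S_{\mathbf a^{*[k]}}\|<\infty$), then (i) is also equivalent to: (iii) for every fixed integer $p\ge0$, $\lim_{k\to\infty}\|S_{\mathbf q^{[k+p]}}\cdots S_{\mathbf q^{[k]}}-S_{\mathbf q^{*[k+p]}}\cdots S_{\mathbf q^{*[k]}}\|=0$.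
   Context: A subdivision scheme $\{S_{\mathbf a^{[k]}},\,k\ge0\}$ is given by finitely supported masks $\mathbf a^{[k]}=\{a^{[k]}_i\}_{i\in\mathbb Z}$ and operators $(S_{\mathbf a^{[k]}}\mathbf f)_i=\sum_{j\in\mathbb Z}a^{[k]}_{i-2j}f_j$ on $\mathbf f\in\mathbb R^{\mathbb Z}$. Local means: there is a positive integer $N$ with all masks supported in $[-N,N]$. Norms are sup-norms: $\|\mathbf a\|=\sup_i|a_i|$ for masks/sequences, and $\|S_{\mathbf a}\|=\max(\sum_i|a_{2i}|,\sum_i|a_{2i+1}|)$ for operators (operator sup-norm). The scheme reproduces constants if $\sum_ia^{[k]}_{2i}=\sum_ia^{[k]}_{2i+1}=1$ for all $k$; then its difference scheme has masks $q^{[k]}_i=\sum_{j\le i}(-1)^{i-j}a^{[k]}_j$ (equivalently, symbols satisfy $a^{[k]}(z)=(1+z)q^{[k]}(z)$ where $a(z)=\sum_ia_iz^i$). *)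

theory Defs
  imports "HOL-Analysis.Analysis"
begin

type_synonym mask = "int \<Rightarrow> real"
type_synonym seq = "int \<Rightarrow> real"
type_synonym scheme = "nat \<Rightarrow> mask"

definition local_scheme :: "scheme \<Rightarrow> bool" where
  "local_scheme a \<longleftrightarrow> (\<exists>N::int. N > 0 \<and> (\<forall>k i. \<bar>i\<bar> > N \<longrightarrow> a k i = 0))"

(* sums of finitely supported sequences: summing over the (finite) support *)
definition even_sum :: "mask \<Rightarrow> real" where
  "even_sum a = (\<Sum>i\<in>{i. a (2*i) \<noteq> 0}. a (2*i))"

definition odd_sum :: "mask \<Rightarrow> real" where
  "odd_sum a = (\<Sum>i\<in>{i. a (2*i+1) \<noteq> 0}. a (2*i+1))"

definition reproduces_constants :: "scheme \<Rightarrow> bool" where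
  "reproduces_constants a \<longleftrightarrow> (\<forall>k. even_sum (a k) = 1 \<and> odd_sum (a k) = 1)"

definition subdiv :: "mask \<Rightarrow> seq \<Rightarrow> seq" where
  "subdiv a f = (\<lambda>i. \<Sum>j\<in>{j. a (i - 2*j) \<noteq> 0}. a (i - 2*j) * f j)"

definition diff_mask :: "mask \<Rightarrow> mask" where
  "diff_mask a = (\<lambda>i. \<Sum>j\<in>{j. j \<le> i \<and> a j \<noteq> 0}. (-1) ^ nat (i - j) * a j)"

definition sup_norm :: "seq \<Rightarrow> real" where
  "sup_norm f = (SUP i. \<bar>f i\<bar>)"

(* operator sup-norm of a subdivision operator, by the explicit formula *)
definition subdiv_norm :: "mask \<Rightarrow> real" where
  "subdiv_norm a = max (\<Sum>i\<in>{i. a (2*i) \<noteq> 0}. \<bar>a (2*i)\<bar>)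
                       (\<Sum>i\<in>{i. a (2*i+1) \<noteq> 0}. \<bar>a (2*i+1)\<bar>)"

definition op_norm :: "(seq \<Rightarrow> seq) \<Rightarrow> real" where
  "op_norm T = (SUP f\<in>{f. bdd_above (range (\<lambda>i. \<bar>f i\<bar>)) \<and> sup_norm f \<le> 1}. sup_norm (T f))"

definition bounded_scheme :: "scheme \<Rightarrow> bool" where
  "bounded_scheme a \<longleftrightarrow> bdd_above (range (\<lambda>k. subdiv_norm (a k)))"

fun subdiv_prod :: "scheme \<Rightarrow> nat \<Rightarrow> nat \<Rightarrow> seq \<Rightarrow> seq" where
  "subdiv_prod a k 0 = subdiv (a k)"
| "subdiv_prod a k (Suc p) = subdiv (a (k + Suc p)) \<circ> subdiv_prod a k p"

end

theory Submission
  imports Defs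
begin


lemma sn_upper: fixes f :: seq assumes "\<And>i. \<bar>f i\<bar> \<le> M" shows "\<bar>f i\<bar> \<le> sup_norm f"
  unfolding sup_norm_def by (rule cSUP_upper) (auto intro: bdd_aboveI2[where M=M] assms)

lemma sn_least: fixes f :: seq assumes "\<And>i. \<bar>f i\<bar> \<le> M" shows "sup_norm f \<le> M"
  unfolding sup_norm_def by (rule cSUP_least) (auto intro: assms)

lemma sn_nonneg: fixes f :: seq assumes "\<And>i. \<bar>f i\<bar> \<le> M" shows "0 \<le> sup_norm f"
proof -
  have "\<bar>f 0\<bar> \<le> sup_norm f" by (rule sn_upper) (rule assms)
  then show ?thesis by linarith
qed

lemma fin_shift: assumes "finite {i. a i \<noteq> 0}" shows "finite {j::int. a (i - 2*j) \<noteq> (0::real)}"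
proof -
  have "{j::int. a (i - 2*j) \<noteq> 0} = (\<lambda>j. i - 2*j) -` {i. a i \<noteq> 0}" by auto
  moreover have "inj (\<lambda>j::int. i - 2*j)" by (auto simp: inj_def)
  ultimately show ?thesis using finite_vimageI assms by metis
qed

lemma subdiv_on: assumes "finite J" "{j. a (i - 2*j) \<noteq> 0} \<subseteq> J"
  shows "subdiv a f i = (\<Sum>j\<in>J. a (i - 2*j) * f j)"
  unfolding subdiv_def using assms by (intro sum.mono_neutral_left) auto

lemma subdiv_minus_f: "subdiv a (\<lambda>j. g j - h j) i = subdiv a g i - subdiv a h i"
  by (simp add: subdiv_def right_diff_distrib sum_subtractf)

lemma subdiv_minus_mask:
  assumes "finite {i. a i \<noteq> 0}" "finite {i. b i \<noteq> 0}"
  shows "subdiv a g i - subdiv b g i = subdiv (\<lambda>m. a m - b m) g i"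
proof -
  let ?J = "{j. a (i - 2*j) \<noteq> 0} \<union> {j. b (i - 2*j) \<noteq> 0}"
  have f: "finite ?J" using fin_shift[OF assms(1)] fin_shift[OF assms(2)] by auto
  have "subdiv a g i = (\<Sum>j\<in>?J. a (i - 2*j) * g j)" by (rule subdiv_on[OF f]) auto
  moreover have "subdiv b g i = (\<Sum>j\<in>?J. b (i - 2*j) * g j)" by (rule subdiv_on[OF f]) auto
  moreover have "subdiv (\<lambda>m. a m - b m) g i = (\<Sum>j\<in>?J. (a (i - 2*j) - b (i - 2*j)) * g j)"
    by (rule subdiv_on[OF f]) auto
  ultimately show ?thesis by (simp add: left_diff_distrib sum_subtractf)
qed

lemma subdiv_norm_nonneg: "0 \<le> subdiv_norm a"
  unfolding subdiv_norm_def by (simp add: sum_nonneg le_max_iff_disj)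

lemma subdiv_abs_sum: "(\<Sum>j\<in>{j. a (i - 2*j) \<noteq> 0}. \<bar>a (i - 2*j)\<bar>) \<le> subdiv_norm a"
proof (cases "even i")
  case True
  then obtain t where t: "i = 2*t" by blast
  have "(\<Sum>j\<in>{j. a (i - 2*j) \<noteq> 0}. \<bar>a (i - 2*j)\<bar>) = (\<Sum>m\<in>{m. a (2*m) \<noteq> 0}. \<bar>a (2*m)\<bar>)"
    by (rule sum.reindex_bij_witness[where i="\<lambda>m. t - m" and j="\<lambda>j. t - j"]) (auto simp: t algebra_simps)
  then show ?thesis unfolding subdiv_norm_def by simp
next
  case False
  then obtain t where t: "i = 2*t+1" using oddE by blast
  have "(\<Sum>j\<in>{j. a (i - 2*j) \<noteq> 0}. \<bar>a (i - 2*j)\<bar>) = (\<Sum>m\<in>{m. a (2*m+1) \<noteq> 0}. \<bar>a (2*m+1)\<bar>)"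
    by (rule sum.reindex_bij_witness[where i="\<lambda>m. t - m" and j="\<lambda>j. t - j"]) (auto simp: t algebra_simps)
  then show ?thesis unfolding subdiv_norm_def by simp
qed

lemma subdiv_bound:
  assumes "\<And>j. \<bar>g j\<bar> \<le> M"
  shows "\<bar>subdiv a g i\<bar> \<le> subdiv_norm a * M"
proof -
  have M: "0 \<le> M" using assms[of 0] by linarith
  have "\<bar>subdiv a g i\<bar> \<le> (\<Sum>j\<in>{j. a (i - 2*j) \<noteq> 0}. \<bar>a (i - 2*j) * g j\<bar>)"
    unfolding subdiv_def by (rule sum_abs)
  also have "\<dots> \<le> (\<Sum>j\<in>{j. a (i - 2*j) \<noteq> 0}. \<bar>a (i - 2*j)\<bar> * M)"
    by (rule sum_mono) (simp add: abs_mult assms mult_left_mono)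
  also have "\<dots> = (\<Sum>j\<in>{j. a (i - 2*j) \<noteq> 0}. \<bar>a (i - 2*j)\<bar>) * M"
    by (simp add: sum_distrib_right)
  also have "\<dots> \<le> subdiv_norm a * M"
    by (rule mult_right_mono[OF subdiv_abs_sum M])
  finally show ?thesis .
qed

lemma subdiv_norm_le:
  fixes N :: int and d :: mask and M :: real
  assumes N: "0 \<le> N" and supp: "\<And>j. N < \<bar>j\<bar> \<Longrightarrow> d j = 0" and b: "\<And>i. \<bar>d i\<bar> \<le> M"
  shows "subdiv_norm d \<le> (2*N+1) * M"
proof -
  have key: "(\<Sum>i\<in>{i. d (2*i+c) \<noteq> 0}. \<bar>d (2*i+c)\<bar>) \<le> (2*N+1) * M" if c: "c = 0 \<or> c = 1" for c
  proof -
    have sub: "{i. d (2*i+c) \<noteq> 0} \<subseteq> {-N..N}"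
    proof
      fix i assume "i \<in> {i. d (2*i+c) \<noteq> 0}"
      then have "\<bar>2*i+c\<bar> \<le> N" using supp by force
      then show "i \<in> {-N..N}" using c N by auto
    qed
    have "(\<Sum>i\<in>{i. d (2*i+c) \<noteq> 0}. \<bar>d (2*i+c)\<bar>) \<le> (\<Sum>i\<in>{-N..N}. \<bar>d (2*i+c)\<bar>)"
      by (rule sum_mono2[OF _ sub]) auto
    also have "\<dots> \<le> (\<Sum>i\<in>{-N..N}. M)" by (rule sum_mono) (simp add: b)
    also have "\<dots> = (2*N+1) * M" using N by simp
    finally show ?thesis .
  qed
  show ?thesis unfolding subdiv_norm_def using key[of 0] key[of 1] by simp
qed


lemma split_sum:
  fixes N :: int and a h g :: mask
  assumes supp: "\<And>j. N < \<bar>j\<bar> \<Longrightarrow> a j = 0"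
    and hz: "\<And>j. a j = 0 \<Longrightarrow> h j = 0" and gz: "\<And>j. a j = 0 \<Longrightarrow> g j = 0"
  shows "(\<Sum>j\<in>{-N..N}. if even j then h j else g j)
       = (\<Sum>m\<in>{m. a (2*m) \<noteq> 0}. h (2*m)) + (\<Sum>m\<in>{m. a (2*m+1) \<noteq> 0}. g (2*m+1))"
proof -
  have "(\<Sum>j\<in>{-N..N}. if even j then h j else g j)
      = (\<Sum>j\<in>{-N..N} \<inter> {j. even j}. h j) + (\<Sum>j\<in>{-N..N} \<inter> - {j. even j}. g j)"
    by (rule sum.If_cases) simp
  moreover have "(\<Sum>m\<in>{m. a (2*m) \<noteq> 0}. h (2*m)) = (\<Sum>j\<in>{j. a j \<noteq> 0 \<and> even j}. h j)"
    by (rule sum.reindex_bij_witness[where i="\<lambda>j. j div 2" and j="\<lambda>m. 2*m"]) auto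
  moreover have "(\<Sum>j\<in>{j. a j \<noteq> 0 \<and> even j}. h j) = (\<Sum>j\<in>{-N..N} \<inter> {j. even j}. h j)"
    by (rule sum.mono_neutral_left) (use supp hz in \<open>force+\<close>)
  moreover have "(\<Sum>m\<in>{m. a (2*m+1) \<noteq> 0}. g (2*m+1)) = (\<Sum>j\<in>{j. a j \<noteq> 0 \<and> odd j}. g j)"
    by (rule sum.reindex_bij_witness[where i="\<lambda>j. j div 2" and j="\<lambda>m. 2*m+1"]) auto
  moreover have "(\<Sum>j\<in>{j. a j \<noteq> 0 \<and> odd j}. g j) = (\<Sum>j\<in>{-N..N} \<inter> - {j. even j}. g j)"
    by (rule sum.mono_neutral_left) (use supp gz in \<open>force+\<close>)
  ultimately show ?thesis by simp
qed

lemma abs_sum_le: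
  fixes N :: int and a :: mask
  assumes supp: "\<And>j. N < \<bar>j\<bar> \<Longrightarrow> a j = 0"
  shows "(\<Sum>j\<in>{-N..N}. \<bar>a j\<bar>) \<le> 2 * subdiv_norm a"
proof -
  have "(\<Sum>j\<in>{-N..N}. \<bar>a j\<bar>) = (\<Sum>j\<in>{-N..N}. if even j then \<bar>a j\<bar> else \<bar>a j\<bar>)" by simp
  also have "\<dots> = (\<Sum>m\<in>{m. a (2*m) \<noteq> 0}. \<bar>a (2*m)\<bar>) + (\<Sum>m\<in>{m. a (2*m+1) \<noteq> 0}. \<bar>a (2*m+1)\<bar>)"
    by (rule split_sum[OF supp]) auto
  also have "\<dots> \<le> 2 * subdiv_norm a" unfolding subdiv_norm_def by linarith
  finally show ?thesis .
qed

lemma sign_sum_zero: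
  fixes N :: int and a :: mask
  assumes supp: "\<And>j. N < \<bar>j\<bar> \<Longrightarrow> a j = 0" and e: "even_sum a = 1" and o: "odd_sum a = 1"
  shows "(\<Sum>j\<in>{-N..N}. if even j then a j else - a j) = 0"
proof -
  have "(\<Sum>j\<in>{-N..N}. if even j then a j else - a j)
      = (\<Sum>m\<in>{m. a (2*m) \<noteq> 0}. a (2*m)) + (\<Sum>m\<in>{m. a (2*m+1) \<noteq> 0}. - a (2*m+1))"
    by (rule split_sum[OF supp]) auto
  also have "\<dots> = even_sum a - odd_sum a"
    unfolding even_sum_def odd_sum_def by (simp add: sum_negf)
  finally show ?thesis using e o by simp
qed

lemma neg1_pow: "0 \<le> (x::int) \<Longrightarrow> (-1::real) ^ nat x = (if even x then 1 else -1)"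
  by (simp add: even_nat_iff)

lemma qform:
  fixes N :: int and a :: mask
  assumes N: "0 \<le> N" and supp: "\<And>j. N < \<bar>j\<bar> \<Longrightarrow> a j = 0"
  shows "diff_mask a i = (\<Sum>j\<in>{-N..i}. (-1) ^ nat (i - j) * a j)"
  unfolding diff_mask_def
  by (rule sum.mono_neutral_left) (use supp in \<open>force+\<close>)

lemma q_lo:
  fixes N :: int and a :: mask
  assumes N: "0 \<le> N" and supp: "\<And>j. N < \<bar>j\<bar> \<Longrightarrow> a j = 0" and i: "i < -N"
  shows "diff_mask a i = 0"
  using qform[OF N supp, where i=i] i by simp

lemma q_hi:
  fixes N :: int and a :: mask
  assumes N: "0 \<le> N" and supp: "\<And>j. N < \<bar>j\<bar> \<Longrightarrow> a j = 0" and e: "even_sum a = 1" and o: "odd_sum a = 1"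
    and i: "N \<le> i"
  shows "diff_mask a i = 0"
proof -
  have "diff_mask a i = (\<Sum>j\<in>{-N..i}. (-1) ^ nat (i - j) * a j)" by (rule qform[OF N supp])
  also have "\<dots> = (\<Sum>j\<in>{-N..N}. (-1) ^ nat (i - j) * a j)"
    by (rule sum.mono_neutral_right) (use supp i in \<open>force+\<close>)
  also have "\<dots> = (\<Sum>j\<in>{-N..N}. (if even i then 1 else -1) * (if even j then a j else - a j))"
  proof (rule sum.cong[OF refl])
    fix j assume "j \<in> {-N..N}"
    then have "0 \<le> i - j" using i by simp
    then show "(-1) ^ nat (i - j) * a j = (if even i then 1 else -1) * (if even j then a j else - a j)"
      by (simp add: neg1_pow)
  qed
  also have "\<dots> = (if even i then 1 else -1) * (\<Sum>j\<in>{-N..N}. (if even j then a j else - a j))"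
    by (simp add: sum_distrib_left)
  also have "\<dots> = 0" using sign_sum_zero[OF supp e o] by simp
  finally show ?thesis .
qed

lemma q_rec:
  fixes N :: int and a :: mask
  assumes N: "0 \<le> N" and supp: "\<And>j. N < \<bar>j\<bar> \<Longrightarrow> a j = 0"
  shows "a i = diff_mask a i + diff_mask a (i - 1)"
proof (cases "i < -N")
  case True
  then show ?thesis using q_lo[OF N supp, where i=i] q_lo[OF N supp, where i="i-1"] supp[of i] by simp
next
  case False
  have s: "{-N..i} = insert i {-N..i-1}" using False by auto
  have "diff_mask a i = (\<Sum>j\<in>{-N..i}. (-1) ^ nat (i - j) * a j)" by (rule qform[OF N supp])
  also have "\<dots> = a i + (\<Sum>j\<in>{-N..i-1}. (-1) ^ nat (i - j) * a j)" by (simp add: s)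
  also have "(\<Sum>j\<in>{-N..i-1}. (-1) ^ nat (i - j) * a j) = - (\<Sum>j\<in>{-N..i-1}. (-1) ^ nat (i - 1 - j) * a j)"
    unfolding sum_negf[symmetric]
  proof (rule sum.cong[OF refl])
    fix j assume "j \<in> {-N..i-1}"
    then have "nat (i - j) = Suc (nat (i - 1 - j))" by auto
    then show "(-1) ^ nat (i - j) * a j = - ((-1) ^ nat (i - 1 - j) * a j)" by simp
  qed
  also have "(\<Sum>j\<in>{-N..i-1}. (-1) ^ nat (i - 1 - j) * a j) = diff_mask a (i - 1)"
    by (rule qform[OF N supp, symmetric])
  finally show ?thesis by simp
qed

lemma q_diff_abs:
  fixes N :: int and a b :: mask
  assumes N: "0 \<le> N" and sa: "\<And>j. N < \<bar>j\<bar> \<Longrightarrow> a j = 0" and sb: "\<And>j. N < \<bar>j\<bar> \<Longrightarrow> b j = 0"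
    and ha: "\<And>i. N \<le> i \<Longrightarrow> diff_mask a i = 0" and hb: "\<And>i. N \<le> i \<Longrightarrow> diff_mask b i = 0"
  shows "\<bar>diff_mask a i - diff_mask b i\<bar> \<le> (\<Sum>j\<in>{-N..N}. \<bar>a j - b j\<bar>)"
proof (cases "N \<le> i")
  case True
  then show ?thesis using ha hb by (simp add: sum_nonneg)
next
  case False
  have "diff_mask a i - diff_mask b i = (\<Sum>j\<in>{-N..i}. (-1) ^ nat (i - j) * (a j - b j))"
    by (simp add: qform[OF N sa] qform[OF N sb] sum_subtractf right_diff_distrib)
  also have "\<bar>\<dots>\<bar> \<le> (\<Sum>j\<in>{-N..i}. \<bar>(-1) ^ nat (i - j) * (a j - b j)\<bar>)" by (rule sum_abs)
  also have "\<dots> = (\<Sum>j\<in>{-N..i}. \<bar>a j - b j\<bar>)" by (simp add: abs_mult power_abs)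
  also have "\<dots> \<le> (\<Sum>j\<in>{-N..N}. \<bar>a j - b j\<bar>)" by (rule sum_mono2) (use False in auto)
  finally show ?thesis .
qed


lemma prod_bound:
  assumes "\<And>k. subdiv_norm (q k) \<le> B" "0 \<le> B" "\<And>j. \<bar>f j\<bar> \<le> M"
  shows "\<bar>subdiv_prod q k p f i\<bar> \<le> B ^ Suc p * M"
  using assms(3)
proof (induction p arbitrary: i)
  case 0
  have M: "0 \<le> M" using 0[of 0] by linarith
  have "\<bar>subdiv (q k) f i\<bar> \<le> subdiv_norm (q k) * M" by (rule subdiv_bound) (rule 0)
  also have "\<dots> \<le> B * M" by (rule mult_right_mono[OF assms(1) M])
  finally show ?case by simp
next
  case (Suc p)
  have IH: "\<And>j. \<bar>subdiv_prod q k p f j\<bar> \<le> B ^ Suc p * M" using Suc by blast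
  have M: "0 \<le> B ^ Suc p * M" using IH[of 0] by linarith
  have "\<bar>subdiv (q (k + Suc p)) (subdiv_prod q k p f) i\<bar> \<le> subdiv_norm (q (k + Suc p)) * (B ^ Suc p * M)"
    by (rule subdiv_bound) (rule IH)
  also have "\<dots> \<le> B * (B ^ Suc p * M)" by (rule mult_right_mono[OF assms(1) M])
  finally show ?case by (simp add: mult.assoc)
qed

lemma core_bound:
  fixes q q' :: scheme
  assumes fq: "\<And>k. finite {i. q k i \<noteq> 0}" and fq': "\<And>k. finite {i. q' k i \<noteq> 0}"
    and B: "0 \<le> B" and bq: "\<And>k. subdiv_norm (q k) \<le> B" and bq': "\<And>k. subdiv_norm (q' k) \<le> B"
    and d: "(\<lambda>k. subdiv_norm (\<lambda>i. q k i - q' k i)) \<longlonglongrightarrow> 0"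
  shows "\<exists>e. e \<longlonglongrightarrow> 0 \<and> (\<forall>k f i. (\<forall>j. \<bar>f j\<bar> \<le> 1) \<longrightarrow>
            \<bar>subdiv_prod q k p f i - subdiv_prod q' k p f i\<bar> \<le> e k)"
proof (induction p)
  case 0
  show ?case
  proof (intro exI conjI allI impI)
    show "(\<lambda>k. subdiv_norm (\<lambda>i. q k i - q' k i)) \<longlonglongrightarrow> 0" by (rule d)
    fix k and f :: seq and i assume f: "\<forall>j. \<bar>f j\<bar> \<le> (1::real)"
    have "\<bar>subdiv (q k) f i - subdiv (q' k) f i\<bar> = \<bar>subdiv (\<lambda>m. q k m - q' k m) f i\<bar>"
      by (simp add: subdiv_minus_mask[OF fq fq'])
    also have "\<dots> \<le> subdiv_norm (\<lambda>m. q k m - q' k m) * 1" by (rule subdiv_bound) (use f in auto)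
    finally show "\<bar>subdiv_prod q k 0 f i - subdiv_prod q' k 0 f i\<bar> \<le> subdiv_norm (\<lambda>i. q k i - q' k i)"
      by simp
  qed
next
  case (Suc p)
  then obtain e where e: "e \<longlonglongrightarrow> 0" and eb: "\<And>k f i. (\<forall>j. \<bar>f j\<bar> \<le> 1) \<Longrightarrow>
            \<bar>subdiv_prod q k p f i - subdiv_prod q' k p f i\<bar> \<le> e k" by blast
  define \<delta> where "\<delta> = (\<lambda>k. subdiv_norm (\<lambda>i. q k i - q' k i))"
  show ?case
  proof (intro exI conjI allI impI)
    have "(\<lambda>k. \<delta> (k + Suc p)) \<longlonglongrightarrow> 0" unfolding \<delta>_def by (rule LIMSEQ_ignore_initial_segment[OF d])
    then have "(\<lambda>k. \<delta> (k + Suc p) * B ^ Suc p) \<longlonglongrightarrow> 0 * B ^ Suc p" by (intro tendsto_intros)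
    moreover have "(\<lambda>k. B * e k) \<longlonglongrightarrow> B * 0" by (intro tendsto_intros e)
    ultimately show "(\<lambda>k. B * e k + \<delta> (k + Suc p) * B ^ Suc p) \<longlonglongrightarrow> 0"
      using tendsto_add by fastforce
    fix k and f :: seq and i assume f: "\<forall>j. \<bar>f j\<bar> \<le> (1::real)"
    define g where "g = subdiv_prod q k p f"
    define g' where "g' = subdiv_prod q' k p f"
    let ?Q = "q (k + Suc p)" and ?Q' = "q' (k + Suc p)"
    have eq: "subdiv_prod q k (Suc p) f i - subdiv_prod q' k (Suc p) f i
        = subdiv ?Q (\<lambda>j. g j - g' j) i + subdiv (\<lambda>m. ?Q m - ?Q' m) g' i"
      by (simp add: g_def g'_def subdiv_minus_f subdiv_minus_mask[OF fq fq', symmetric])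
    have b1: "\<bar>subdiv ?Q (\<lambda>j. g j - g' j) i\<bar> \<le> B * e k"
    proof -
      have h: "\<And>j. \<bar>g j - g' j\<bar> \<le> e k" unfolding g_def g'_def using eb f by blast
      then have "0 \<le> e k" using h[of 0] by linarith
      have "\<bar>subdiv ?Q (\<lambda>j. g j - g' j) i\<bar> \<le> subdiv_norm ?Q * e k" by (rule subdiv_bound) (rule h)
      also have "\<dots> \<le> B * e k" by (rule mult_right_mono[OF bq \<open>0 \<le> e k\<close>])
      finally show ?thesis .
    qed
    have b2: "\<bar>subdiv (\<lambda>m. ?Q m - ?Q' m) g' i\<bar> \<le> \<delta> (k + Suc p) * B ^ Suc p"
    proof -
      have "\<bar>subdiv (\<lambda>m. ?Q m - ?Q' m) g' i\<bar> \<le> subdiv_norm (\<lambda>m. ?Q m - ?Q' m) * (B ^ Suc p * 1)"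
        unfolding g'_def by (rule subdiv_bound, rule prod_bound[OF bq' B]) (use f in auto)
      then show ?thesis by (simp add: \<delta>_def)
    qed
    show "\<bar>subdiv_prod q k (Suc p) f i - subdiv_prod q' k (Suc p) f i\<bar> \<le> B * e k + \<delta> (k + Suc p) * B ^ Suc p"
      unfolding eq using b1 b2 abs_triangle_ineq[of "subdiv ?Q (\<lambda>j. g j - g' j) i" "subdiv (\<lambda>m. ?Q m - ?Q' m) g' i"]
      by linarith
  qed
qed

lemma ball_bound:
  assumes "f \<in> {f. bdd_above (range (\<lambda>i. \<bar>f i\<bar>)) \<and> sup_norm f \<le> 1}"
  shows "\<bar>f j\<bar> \<le> 1"
proof -
  have "\<bar>f j\<bar> \<le> sup_norm f" using assms unfolding sup_norm_def by (auto intro: cSUP_upper)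
  then show ?thesis using assms by auto
qed

lemma op_norm_le:
  fixes T :: "seq \<Rightarrow> seq"
  assumes "\<And>f i. (\<forall>j. \<bar>f j\<bar> \<le> 1) \<Longrightarrow> \<bar>T f i\<bar> \<le> E"
  shows "op_norm T \<le> E" and "0 \<le> op_norm T"
proof -
  let ?S = "{f. bdd_above (range (\<lambda>i. \<bar>f i\<bar>)) \<and> sup_norm f \<le> 1}"
  have z: "(\<lambda>_::int. 0::real) \<in> ?S" unfolding sup_norm_def by simp
  have le: "sup_norm (T f) \<le> E" if "f \<in> ?S" for f
    by (rule sn_least) (rule assms, use ball_bound[OF that] in auto)
  show "op_norm T \<le> E" unfolding op_norm_def proof (rule cSUP_least)
    show "?S \<noteq> {}" using z by (intro notI) simp
  qed (rule le)
  have "0 \<le> sup_norm (T (\<lambda>_::int. 0::real))" by (rule sn_nonneg) (rule assms, simp)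
  also have "\<dots> \<le> op_norm T" unfolding op_norm_def
    by (rule cSUP_upper[OF z]) (rule bdd_aboveI2, rule le)
  finally show "0 \<le> op_norm T" .
qed

lemma core:
  fixes q q' :: scheme
  assumes fq: "\<And>k. finite {i. q k i \<noteq> 0}" and fq': "\<And>k. finite {i. q' k i \<noteq> 0}"
    and B: "0 \<le> B" and bq: "\<And>k. subdiv_norm (q k) \<le> B" and bq': "\<And>k. subdiv_norm (q' k) \<le> B"
    and d: "(\<lambda>k. subdiv_norm (\<lambda>i. q k i - q' k i)) \<longlonglongrightarrow> 0"
  shows "(\<lambda>k. op_norm (\<lambda>f i. subdiv_prod q k p f i - subdiv_prod q' k p f i)) \<longlonglongrightarrow> 0"
proof -
  obtain e where e: "e \<longlonglongrightarrow> 0" and eb: "\<And>k f i. (\<forall>j. \<bar>f j\<bar> \<le> 1) \<Longrightarrow>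
            \<bar>subdiv_prod q k p f i - subdiv_prod q' k p f i\<bar> \<le> e k"
    using core_bound[OF fq fq' B bq bq' d, of p] by blast
  show ?thesis
  proof (rule tendsto_sandwich[OF _ _ tendsto_const e])
    show "\<forall>\<^sub>F k in sequentially. 0 \<le> op_norm (\<lambda>f i. subdiv_prod q k p f i - subdiv_prod q' k p f i)"
      using op_norm_le(2)[OF eb] by simp
    show "\<forall>\<^sub>F k in sequentially. op_norm (\<lambda>f i. subdiv_prod q k p f i - subdiv_prod q' k p f i) \<le> e k"
      using op_norm_le(1)[OF eb] by simp
  qed
qed


lemma subdiv_delta:
  assumes "finite {i. a i \<noteq> 0}"
  shows "subdiv a (\<lambda>j. if j = 0 then 1 else 0) i = a i"
proof -
  let ?A = "{j. a (i - 2*j) \<noteq> 0}"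
  have f: "finite (insert 0 ?A)" using fin_shift[OF assms] by simp
  have "subdiv a (\<lambda>j. if j = 0 then 1 else 0) i = (\<Sum>j\<in>insert 0 ?A. a (i - 2*j) * (if j = 0 then 1 else 0))"
    by (rule subdiv_on[OF f]) auto
  also have "\<dots> = a i * 1 + (\<Sum>j\<in>insert 0 ?A - {0}. a (i - 2*j) * (if j = 0 then 1 else 0))"
    using f by (subst sum.remove[of _ 0]) auto
  also have "(\<Sum>j\<in>insert 0 ?A - {0}. a (i - 2*j) * (if j = 0 then 1 else 0)) = 0"
    by (rule sum.neutral) auto
  finally show ?thesis by simp
qed

lemma diff_mask_zero: "diff_mask (\<lambda>_. 0) i = 0"
  unfolding diff_mask_def by simp

theorem proposition8:
  fixes a a' :: scheme
  assumes "local_scheme a" and "local_scheme a'"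
    and "reproduces_constants a" and "reproduces_constants a'"
  defines "q \<equiv> (\<lambda>k. diff_mask (a k))" and "q' \<equiv> (\<lambda>k. diff_mask (a' k))"
  shows "(((\<lambda>k. sup_norm (\<lambda>i. a k i - a' k i)) \<longlonglongrightarrow> 0) \<longleftrightarrow>
           ((\<lambda>k. sup_norm (\<lambda>i. q k i - q' k i)) \<longlonglongrightarrow> 0)) \<and>
         ((bounded_scheme a \<or> bounded_scheme a') \<longrightarrow>
         (((\<lambda>k. sup_norm (\<lambda>i. a k i - a' k i)) \<longlonglongrightarrow> 0) \<longleftrightarrow>
         (\<forall>p::nat. (\<lambda>k. op_norm (\<lambda>f i. subdiv_prod q k p f i - subdiv_prod q' k p f i))
                     \<longlonglongrightarrow> 0)))"
proof -
  obtain N1 :: int where N1: "N1 > 0" "\<forall>k i. \<bar>i\<bar> > N1 \<longrightarrow> a k i = 0"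
    using assms(1) unfolding local_scheme_def by blast
  obtain N2 :: int where N2: "N2 > 0" "\<forall>k i. \<bar>i\<bar> > N2 \<longrightarrow> a' k i = 0"
    using assms(2) unfolding local_scheme_def by blast
  define N where "N = max N1 N2"
  have N: "0 \<le> N" using N1 by (simp add: N_def)
  have sa: "\<And>k j. N < \<bar>j\<bar> \<Longrightarrow> a k j = 0" using N1 by (auto simp: N_def)
  have sa': "\<And>k j. N < \<bar>j\<bar> \<Longrightarrow> a' k j = 0" using N2 by (auto simp: N_def)
  have ra: "\<And>k. even_sum (a k) = 1" "\<And>k. odd_sum (a k) = 1"
    using assms(3) unfolding reproduces_constants_def by auto
  have ra': "\<And>k. even_sum (a' k) = 1" "\<And>k. odd_sum (a' k) = 1"
    using assms(4) unfolding reproduces_constants_def by auto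
  have hq: "\<And>k i. N \<le> i \<Longrightarrow> q k i = 0" unfolding q_def by (rule q_hi[OF N sa ra])
  have hq': "\<And>k i. N \<le> i \<Longrightarrow> q' k i = 0" unfolding q'_def by (rule q_hi[OF N sa' ra'])
  have lq: "\<And>k i. i < -N \<Longrightarrow> q k i = 0" unfolding q_def by (rule q_lo[OF N sa])
  have lq': "\<And>k i. i < -N \<Longrightarrow> q' k i = 0" unfolding q'_def by (rule q_lo[OF N sa'])
  have sq: "\<And>k i. N < \<bar>i\<bar> \<Longrightarrow> q k i = 0"
    by (metis hq lq abs_if less_le neg_less_iff_less minus_less_iff linorder_not_le)
  have sq': "\<And>k i. N < \<bar>i\<bar> \<Longrightarrow> q' k i = 0"
    by (metis hq' lq' abs_if less_le neg_less_iff_less minus_less_iff linorder_not_le)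
  have fq: "\<And>k. finite {i. q k i \<noteq> 0}"
    by (rule finite_subset[of _ "{-N..N}"]) (use sq in \<open>force+\<close>)
  have fq': "\<And>k. finite {i. q' k i \<noteq> 0}"
    by (rule finite_subset[of _ "{-N..N}"]) (use sq' in \<open>force+\<close>)
  have recq: "\<And>k i. a k i = q k i + q k (i - 1)" unfolding q_def by (rule q_rec[OF N sa])
  have recq': "\<And>k i. a' k i = q' k i + q' k (i - 1)" unfolding q'_def by (rule q_rec[OF N sa'])
  define S where "S = (\<lambda>k. \<Sum>j\<in>{-N..N}. \<bar>a k j - a' k j\<bar>)"
  have qd: "\<And>k i. \<bar>q k i - q' k i\<bar> \<le> S k"
    unfolding S_def q_def q'_def
    by (rule q_diff_abs[OF N sa sa']) (use hq hq' in \<open>auto simp: q_def q'_def\<close>)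
  have ad: "\<And>k i. \<bar>a k i - a' k i\<bar> \<le> S k"
  proof -
    fix k i
    show "\<bar>a k i - a' k i\<bar> \<le> S k"
    proof (cases "\<bar>i\<bar> \<le> N")
      case True
      then show ?thesis unfolding S_def by (intro member_le_sum) auto
    next
      case False
      then show ?thesis using sa[of i k] sa'[of i k] unfolding S_def by (simp add: sum_nonneg)
    qed
  qed
  define X where "X = (\<lambda>k. sup_norm (\<lambda>i. a k i - a' k i))"
  define Y where "Y = (\<lambda>k. sup_norm (\<lambda>i. q k i - q' k i))"
  have X0: "\<And>k. 0 \<le> X k" unfolding X_def by (rule sn_nonneg) (rule ad)
  have Y0: "\<And>k. 0 \<le> Y k" unfolding Y_def by (rule sn_nonneg) (rule qd)
  have SX: "\<And>k. S k \<le> (2*N+1) * X k"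
  proof -
    fix k
    have "S k \<le> (\<Sum>j\<in>{-N..N}. X k)" unfolding S_def X_def
      by (rule sum_mono) (rule sn_upper, rule ad)
    also have "\<dots> = (2*N+1) * X k" using N by simp
    finally show "S k \<le> (2*N+1) * X k" .
  qed
  have YX: "\<And>k. Y k \<le> (2*N+1) * X k"
    using SX unfolding Y_def by (meson order_trans sn_least qd)
  have XY: "\<And>k. X k \<le> 2 * Y k"
  proof -
    fix k
    have "\<bar>a k i - a' k i\<bar> \<le> 2 * Y k" for i
    proof -
      have "a k i - a' k i = (q k i - q' k i) + (q k (i-1) - q' k (i-1))" using recq recq' by simp
      moreover have "\<bar>q k i - q' k i\<bar> \<le> Y k" "\<bar>q k (i-1) - q' k (i-1)\<bar> \<le> Y k"
        unfolding Y_def by (rule sn_upper, rule qd)+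
      ultimately show ?thesis by linarith
    qed
    then show "X k \<le> 2 * Y k" unfolding X_def by (rule sn_least)
  qed
  have XtoY: "X \<longlonglongrightarrow> 0 \<Longrightarrow> Y \<longlonglongrightarrow> 0"
  proof -
    assume "X \<longlonglongrightarrow> 0"
    then have lim: "(\<lambda>k. (2*N+1) * X k) \<longlonglongrightarrow> 0"
      using tendsto_mult[OF tendsto_const[of "real_of_int (2*N+1)"]] by fastforce
    show "Y \<longlonglongrightarrow> 0"
      by (rule tendsto_sandwich[OF _ _ tendsto_const lim]; intro always_eventually allI Y0 YX)
  qed
  have YtoX: "Y \<longlonglongrightarrow> 0 \<Longrightarrow> X \<longlonglongrightarrow> 0"
  proof -
    assume "Y \<longlonglongrightarrow> 0"
    then have lim: "(\<lambda>k. 2 * Y k) \<longlonglongrightarrow> 0"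
      using tendsto_mult[OF tendsto_const[of "2::real"]] by fastforce
    show "X \<longlonglongrightarrow> 0"
      by (rule tendsto_sandwich[OF _ _ tendsto_const lim]; intro always_eventually allI X0 XY)
  qed
  have part2: "X \<longlonglongrightarrow> 0 \<longleftrightarrow>
         (\<forall>p::nat. (\<lambda>k. op_norm (\<lambda>f i. subdiv_prod q k p f i - subdiv_prod q' k p f i)) \<longlonglongrightarrow> 0)"
    if bd: "bounded_scheme a \<or> bounded_scheme a'"
  proof
    assume "\<forall>p. (\<lambda>k. op_norm (\<lambda>f i. subdiv_prod q k p f i - subdiv_prod q' k p f i)) \<longlonglongrightarrow> 0"
    then have T0: "(\<lambda>k. op_norm (\<lambda>f i. subdiv_prod q k 0 f i - subdiv_prod q' k 0 f i)) \<longlonglongrightarrow> 0" by blast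
    have YT: "Y k \<le> op_norm (\<lambda>f i. subdiv_prod q k 0 f i - subdiv_prod q' k 0 f i)" for k
    proof -
      let ?T = "\<lambda>f i. subdiv_prod q k 0 f i - subdiv_prod q' k 0 f i"
      let ?S = "{f. bdd_above (range (\<lambda>i. \<bar>f i\<bar>)) \<and> sup_norm f \<le> 1}"
      define f0 :: seq where "f0 = (\<lambda>j. if j = 0 then 1 else 0)"
      have f0b: "\<bar>f0 j\<bar> \<le> 1" for j by (simp add: f0_def)
      have f0S: "f0 \<in> ?S"
      proof -
        have "bdd_above (range (\<lambda>i. \<bar>f0 i\<bar>))" by (rule bdd_aboveI2[where M=1]) (rule f0b)
        moreover have "sup_norm f0 \<le> 1" by (rule sn_least) (rule f0b)
        ultimately show ?thesis by simp
      qed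
      have "?T f0 = (\<lambda>i. q k i - q' k i)"
        unfolding f0_def by (simp add: subdiv_delta[OF fq] subdiv_delta[OF fq'])
      then have "Y k = sup_norm (?T f0)" unfolding Y_def by simp
      also have "\<dots> \<le> op_norm ?T" unfolding op_norm_def
      proof (rule cSUP_upper[OF f0S], rule bdd_aboveI2)
        fix f assume f: "f \<in> ?S"
        show "sup_norm (?T f) \<le> subdiv_norm (q k) * 1 + subdiv_norm (q' k) * 1"
        proof (rule sn_least)
          fix i
          have "\<bar>subdiv (q k) f i\<bar> \<le> subdiv_norm (q k) * 1" "\<bar>subdiv (q' k) f i\<bar> \<le> subdiv_norm (q' k) * 1"
            by (rule subdiv_bound, rule ball_bound[OF f])+
          then show "\<bar>?T f i\<bar> \<le> subdiv_norm (q k) * 1 + subdiv_norm (q' k) * 1" by simp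
        qed
      qed
      finally show ?thesis .
    qed
    have "Y \<longlonglongrightarrow> 0"
      by (rule tendsto_sandwich[OF _ _ tendsto_const T0]; intro always_eventually allI Y0 YT)
    then show "X \<longlonglongrightarrow> 0" by (rule YtoX)
  next
    assume "X \<longlonglongrightarrow> 0"
    then have Yl: "Y \<longlonglongrightarrow> 0" by (rule XtoY)
    obtain K where K: "\<And>k. Y k \<le> K"
      using convergent_imp_Bseq[OF convergentI[OF Yl]] by (metis BseqE real_norm_def abs_le_D1)
    have qa: "\<And>k i. \<bar>q k i\<bar> \<le> 2 * subdiv_norm (a k)"
    proof -
      fix k i
      have "\<bar>diff_mask (a k) i - diff_mask (\<lambda>_. 0) i\<bar> \<le> (\<Sum>j\<in>{-N..N}. \<bar>a k j - 0\<bar>)"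
        by (rule q_diff_abs[OF N sa]) (use hq in \<open>auto simp: q_def diff_mask_zero\<close>)
      also have "\<dots> \<le> 2 * subdiv_norm (a k)" using abs_sum_le[OF sa] by simp
      finally show "\<bar>q k i\<bar> \<le> 2 * subdiv_norm (a k)" by (simp add: q_def diff_mask_zero)
    qed
    have qa': "\<And>k i. \<bar>q' k i\<bar> \<le> 2 * subdiv_norm (a' k)"
    proof -
      fix k i
      have "\<bar>diff_mask (a' k) i - diff_mask (\<lambda>_. 0) i\<bar> \<le> (\<Sum>j\<in>{-N..N}. \<bar>a' k j - 0\<bar>)"
        by (rule q_diff_abs[OF N sa']) (use hq' in \<open>auto simp: q'_def diff_mask_zero\<close>)
      also have "\<dots> \<le> 2 * subdiv_norm (a' k)" using abs_sum_le[OF sa'] by simp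
      finally show "\<bar>q' k i\<bar> \<le> 2 * subdiv_norm (a' k)" by (simp add: q'_def diff_mask_zero)
    qed
    have qdY: "\<And>k i. \<bar>q k i - q' k i\<bar> \<le> Y k" unfolding Y_def by (rule sn_upper, rule qd)
    obtain Bq where Bq: "\<And>k i. \<bar>q k i\<bar> \<le> Bq" "\<And>k i. \<bar>q' k i\<bar> \<le> Bq"
    proof (cases "bounded_scheme a")
      case True
      then obtain Ba where Ba: "\<And>k. subdiv_norm (a k) \<le> Ba"
        unfolding bounded_scheme_def bdd_above_def by blast
      show ?thesis
      proof (rule that[of "2 * Ba + K"])
        fix k i
        show "\<bar>q k i\<bar> \<le> 2 * Ba + K" using qa[of k i] Ba[of k] K[of k] Y0[of k] by linarith
        show "\<bar>q' k i\<bar> \<le> 2 * Ba + K" using qa[of k i] Ba[of k] K[of k] qdY[of k i] by linarith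
      qed
    next
      case False
      then have "bounded_scheme a'" using bd by blast
      then obtain Ba where Ba: "\<And>k. subdiv_norm (a' k) \<le> Ba"
        unfolding bounded_scheme_def bdd_above_def by blast
      show ?thesis
      proof (rule that[of "2 * Ba + K"])
        fix k i
        show "\<bar>q' k i\<bar> \<le> 2 * Ba + K" using qa'[of k i] Ba[of k] K[of k] Y0[of k] by linarith
        show "\<bar>q k i\<bar> \<le> 2 * Ba + K" using qa'[of k i] Ba[of k] K[of k] qdY[of k i] by linarith
      qed
    qed
    have Bq0: "0 \<le> Bq" using Bq(1)[of 0 0] by linarith
    have B0: "0 \<le> (2*N+1) * Bq" using N Bq0 by simp
    have bq: "\<And>k. subdiv_norm (q k) \<le> (2*N+1) * Bq" by (rule subdiv_norm_le[OF N sq Bq(1)])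
    have bq': "\<And>k. subdiv_norm (q' k) \<le> (2*N+1) * Bq" by (rule subdiv_norm_le[OF N sq' Bq(2)])
    have dle: "\<And>k. subdiv_norm (\<lambda>i. q k i - q' k i) \<le> (2*N+1) * Y k"
      by (rule subdiv_norm_le[OF N]) (use sq sq' qdY in auto)
    have lim: "(\<lambda>k. (2*N+1) * Y k) \<longlonglongrightarrow> 0"
      using tendsto_mult[OF tendsto_const[of "real_of_int (2*N+1)"] Yl] by fastforce
    have d: "(\<lambda>k. subdiv_norm (\<lambda>i. q k i - q' k i)) \<longlonglongrightarrow> 0"
      by (rule tendsto_sandwich[OF _ _ tendsto_const lim]; intro always_eventually allI subdiv_norm_nonneg dle)
    show "\<forall>p. (\<lambda>k. op_norm (\<lambda>f i. subdiv_prod q k p f i - subdiv_prod q' k p f i)) \<longlonglongrightarrow> 0"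
      using core[OF fq fq' B0 bq bq' d] by blast
  qed
  show ?thesis using XtoY YtoX part2 unfolding X_def Y_def by blast
qed

end
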